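(* Let $\alpha\in(0,1)$, $R>0$, and for $\lambda\in[-\pi,\pi]$ let $V(\lambda)$ denote the maximal Phase-II observation time when at the contact time $t_2$ the target is on the boundary of the observation disk with relative bearing $\lambda$. Then $V$ is monotonically non-decreasing on $[-\pi,0]$, monotonically non-increasing on $[0,\pi]$, and attains its maximum at $\lambda=0$.
   Context: Target: position $(0,y_T(t))$, $\dot y_T=1$. Observer: position $(x_O(t),y_O(t))$, $\dot x_O=\alpha\cos\psi(t)$, $\dot y_O=\alpha\sin\psi(t)$, heading $\psi$ a measurable control. Contact with bearing $\lambda$ at time $t_2$ means $\big(x_O(t_2),y_O(t_2)-y_T(t_2)\big)=R(\sin\lambda,\cos\lambda)$. For a control on $[t_2,\infty)$, $t_f=\inf\{t\ge t_2: x_O(t)^2+(y_O(t)-y_T(t))^2>R^2\}$ and the observation time is $t_f-t_2$; $V(\lambda)$ is the supremum of $t_f-t_2$ over all controls. *)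

theory Defs
  imports "HOL-Analysis.Analysis"
begin

text \<open>Phase II: at contact time t2 the target is at (0, yT2); the target moves as
  y_T(t) = yT2 + (t - t2).\<close>

definition obs_x :: "real \<Rightarrow> real \<Rightarrow> real \<Rightarrow> real \<Rightarrow> (real \<Rightarrow> real) \<Rightarrow> real \<Rightarrow> real" where
  "obs_x \<alpha> R t2 lam \<psi> t = R * sin lam + integral {t2..t} (\<lambda>s. \<alpha> * cos (\<psi> s))"

definition obs_y :: "real \<Rightarrow> real \<Rightarrow> real \<Rightarrow> real \<Rightarrow> real \<Rightarrow> (real \<Rightarrow> real) \<Rightarrow> real \<Rightarrow> real" where
  "obs_y \<alpha> R t2 yT2 lam \<psi> t = yT2 + R * cos lam + integral {t2..t} (\<lambda>s. \<alpha> * sin (\<psi> s))"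

definition tgt_y :: "real \<Rightarrow> real \<Rightarrow> real \<Rightarrow> real" where
  "tgt_y t2 yT2 t = yT2 + (t - t2)"

definition exit_time :: "real \<Rightarrow> real \<Rightarrow> real \<Rightarrow> real \<Rightarrow> real \<Rightarrow> (real \<Rightarrow> real) \<Rightarrow> real" where
  "exit_time \<alpha> R t2 yT2 lam \<psi> =
     Inf {t. t2 \<le> t \<and> (obs_x \<alpha> R t2 lam \<psi> t)\<^sup>2
                 + (obs_y \<alpha> R t2 yT2 lam \<psi> t - tgt_y t2 yT2 t)\<^sup>2 > R\<^sup>2}"

definition V :: "real \<Rightarrow> real \<Rightarrow> real \<Rightarrow> real \<Rightarrow> real \<Rightarrow> real" where
  "V \<alpha> R t2 yT2 lam =
     Sup {exit_time \<alpha> R t2 yT2 lam \<psi> - t2 | \<psi>. \<psi> \<in> borel_measurable borel}"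

end

theory Submission
  imports Defs
begin


lemma meas_leb:
  fixes \<psi> :: "real \<Rightarrow> real"
  assumes "\<psi> \<in> borel_measurable borel"
  shows "\<psi> \<in> borel_measurable (lebesgue_on S)"
  by (metis assms measurable_lborel2 measurable_restrict_space1 measurable_completion)

lemma intg:
  fixes \<psi> :: "real \<Rightarrow> real"
  assumes "\<psi> \<in> borel_measurable borel" and "0 \<le> a"
  shows "(\<lambda>s. a * cos (\<psi> s)) integrable_on {x..y}" "(\<lambda>s. a * sin (\<psi> s)) integrable_on {x..y}"
proof -
  have m: "\<psi> \<in> borel_measurable (lebesgue_on {x..y})" using meas_leb assms by blast
  show "(\<lambda>s. a * cos (\<psi> s)) integrable_on {x..y}"
  proof (rule measurable_bounded_by_integrable_imp_integrable[where g="\<lambda>_. a"])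
    show "(\<lambda>s. a * cos (\<psi> s)) \<in> borel_measurable (lebesgue_on {x..y})" using m by measurable
    show "(\<lambda>_. a) integrable_on {x..y}" by (rule integrable_const_ivl)
    show "norm (a * cos (\<psi> s)) \<le> a" for s using assms(2) by (simp add: abs_mult mult_left_le)
  qed auto
  show "(\<lambda>s. a * sin (\<psi> s)) integrable_on {x..y}"
  proof (rule measurable_bounded_by_integrable_imp_integrable[where g="\<lambda>_. a"])
    show "(\<lambda>s. a * sin (\<psi> s)) \<in> borel_measurable (lebesgue_on {x..y})" using m by measurable
    show "(\<lambda>_. a) integrable_on {x..y}" by (rule integrable_const_ivl)
    show "norm (a * sin (\<psi> s)) \<le> a" for s using assms(2) by (simp add: abs_mult mult_left_le)
  qed auto
qed

lemma int_le:
  fixes f :: "real \<Rightarrow> real"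
  assumes "f integrable_on {x..y}" "x \<le> y" "\<And>s. f s \<le> a"
  shows "integral {x..y} f \<le> a * (y - x)"
proof -
  have "integral {x..y} f \<le> integral {x..y} (\<lambda>_. a)"
    by (rule integral_le) (use assms in auto)
  then show ?thesis using assms by (simp add: mult.commute)
qed

lemma int_ge:
  fixes f :: "real \<Rightarrow> real"
  assumes "f integrable_on {x..y}" "x \<le> y" "\<And>s. a \<le> f s"
  shows "a * (y - x) \<le> integral {x..y} f"
proof -
  have "integral {x..y} (\<lambda>_. a) \<le> integral {x..y} f"
    by (rule integral_le) (use assms in auto)
  then show ?thesis using assms by (simp add: mult.commute)
qed

definition IX :: "real \<Rightarrow> (real \<Rightarrow> real) \<Rightarrow> real \<Rightarrow> real \<Rightarrow> real" where
  "IX a \<psi> t2 t = integral {t2..t} (\<lambda>s. a * cos (\<psi> s))"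
definition IY :: "real \<Rightarrow> (real \<Rightarrow> real) \<Rightarrow> real \<Rightarrow> real \<Rightarrow> real" where
  "IY a \<psi> t2 t = integral {t2..t} (\<lambda>s. a * sin (\<psi> s)) - (t - t2)"
definition ins :: "real \<Rightarrow> real \<Rightarrow> real \<Rightarrow> real \<Rightarrow> real \<Rightarrow> (real \<Rightarrow> real) \<Rightarrow> real \<Rightarrow> bool" where
  "ins a R t2 px py \<psi> t \<longleftrightarrow> (px + IX a \<psi> t2 t)\<^sup>2 + (py + IY a \<psi> t2 t)\<^sup>2 \<le> R\<^sup>2"

lemma exit_eq:
  "exit_time a R t2 yT2 lam \<psi> = Inf {t. t2 \<le> t \<and> \<not> ins a R t2 (R * sin lam) (R * cos lam) \<psi> t}"
  unfolding exit_time_def ins_def IX_def IY_def obs_x_def obs_y_def tgt_y_def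
  by (simp add: not_le algebra_simps)

lemma sc_bounds:
  fixes a x :: real assumes "0 \<le> a"
  shows "a * sin x \<le> a" "a * cos x \<le> a" "- a \<le> a * sin x" "- a \<le> a * cos x"
  using mult_left_le[OF sin_le_one assms] mult_left_le[OF cos_le_one assms]
    mult_left_mono[OF sin_ge_minus_one assms, of x] mult_left_mono[OF cos_ge_minus_one assms, of x]
  by auto

lemma IY_le:
  assumes "\<psi> \<in> borel_measurable borel" "0 \<le> a" "t2 \<le> t"
  shows "IY a \<psi> t2 t \<le> - (1 - a) * (t - t2)"
proof -
  have "integral {t2..t} (\<lambda>s. a * sin (\<psi> s)) \<le> a * (t - t2)"
    by (rule int_le) (use assms intg sc_bounds in auto)
  then show ?thesis unfolding IY_def by (simp add: algebra_simps)
qed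

lemma IX_abs:
  assumes "\<psi> \<in> borel_measurable borel" "0 \<le> a" "t2 \<le> t"
  shows "\<bar>IX a \<psi> t2 t\<bar> \<le> a * (t - t2)"
proof -
  have "integral {t2..t} (\<lambda>s. a * cos (\<psi> s)) \<le> a * (t - t2)"
    by (rule int_le) (use assms intg sc_bounds in auto)
  moreover have "(-a) * (t - t2) \<le> integral {t2..t} (\<lambda>s. a * cos (\<psi> s))"
    by (rule int_ge) (use assms intg sc_bounds in auto)
  ultimately show ?thesis unfolding IX_def by auto
qed

lemma IX0[simp]: "IX a \<psi> t2 t2 = 0" and IY0[simp]: "IY a \<psi> t2 t2 = 0"
  unfolding IX_def IY_def by auto

lemma sq_less:
  fixes z R :: real
  assumes "z < - R" "0 < R"
  shows "R\<^sup>2 < z\<^sup>2"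
proof -
  have "0 < (-z - R) * (-z + R)" using assms by (intro mult_pos_pos) auto
  then show ?thesis by (simp add: power2_eq_square algebra_simps)
qed

lemma exit_props:
  fixes a R t2 px py :: real
  assumes "\<psi> \<in> borel_measurable borel" "0 < a" "a < 1" "0 < R" "\<bar>py\<bar> \<le> R"
  defines "S \<equiv> {t. t2 \<le> t \<and> \<not> ins a R t2 px py \<psi> t}"
  shows "S \<noteq> {}" "t2 \<le> Inf S" "Inf S \<le> t2 + 2 * R / (1 - a) + 1"
    "\<And>T. (\<forall>t\<in>{t2..t2+T}. ins a R t2 px py \<psi> t) \<Longrightarrow> t2 + T \<le> Inf S"
    "\<And>t. t2 \<le> t \<Longrightarrow> t < Inf S \<Longrightarrow> ins a R t2 px py \<psi> t"
proof -
  define tb where "tb = t2 + 2 * R / (1 - a) + 1"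
  have tb: "t2 \<le> tb" unfolding tb_def using assms by simp
  have "IY a \<psi> t2 tb \<le> - (1 - a) * (tb - t2)" using IY_le assms tb by auto
  also have "- (1 - a) * (tb - t2) = - 2 * R - (1 - a)" unfolding tb_def using assms by (simp add: field_simps)
  finally have "py + IY a \<psi> t2 tb < - R" using assms by linarith
  then have "R\<^sup>2 < (py + IY a \<psi> t2 tb)\<^sup>2" using assms sq_less by blast
  then have "\<not> ins a R t2 px py \<psi> tb" unfolding ins_def
    using zero_le_power2[of "px + IX a \<psi> t2 tb"] by linarith
  then have tbS: "tb \<in> S" unfolding S_def using tb by auto
  then show "S \<noteq> {}" by auto
  have bb: "bdd_below S" unfolding S_def by (rule bdd_belowI[of _ t2]) auto
  show "t2 \<le> Inf S" by (rule cInf_greatest) (use tbS S_def in auto)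
  show "Inf S \<le> t2 + 2 * R / (1 - a) + 1" using cInf_lower[OF tbS bb] tb_def by simp
  show "t2 + T \<le> Inf S" if "\<forall>t\<in>{t2..t2+T}. ins a R t2 px py \<psi> t" for T
  proof (rule cInf_greatest)
    show "S \<noteq> {}" using tbS by auto
    fix x assume "x \<in> S"
    then show "t2 + T \<le> x" using that unfolding S_def by force
  qed
  show "ins a R t2 px py \<psi> t" if "t2 \<le> t" "t < Inf S" for t
  proof (rule ccontr)
    assume "\<not> ins a R t2 px py \<psi> t"
    then have "t \<in> S" using that S_def by auto
    then show False using cInf_lower[OF _ bb, of t] that by auto
  qed
qed



lemma abs_cos_le: "0 < (R::real) \<Longrightarrow> \<bar>R * cos l\<bar> \<le> R"
  using mult_left_le[OF abs_cos_le_one[of l], of R] by (simp add: abs_mult)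

lemma V_facts:
  fixes a R t2 yT2 l :: real
  assumes "0 < a" "a < 1" "0 < R"
  defines "A \<equiv> {exit_time a R t2 yT2 l \<psi> - t2 | \<psi>. \<psi> \<in> borel_measurable borel}"
  shows "A \<noteq> {}" "bdd_above A" "V a R t2 yT2 l = Sup A"
    "\<And>\<psi>. \<psi> \<in> borel_measurable borel \<Longrightarrow> exit_time a R t2 yT2 l \<psi> - t2 \<le> V a R t2 yT2 l"
    "0 \<le> V a R t2 yT2 l"
proof -
  have ab: "\<bar>R * cos l\<bar> \<le> R" using abs_cos_le assms by blast
  have ep3: "\<And>\<psi>. \<psi> \<in> borel_measurable borel \<Longrightarrow> exit_time a R t2 yT2 l \<psi> \<le> t2 + 2 * R / (1 - a) + 1"
    using exit_props(3)[OF _ assms(1-3) ab] by (simp add: exit_eq)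
  have ep2: "\<And>\<psi>. \<psi> \<in> borel_measurable borel \<Longrightarrow> t2 \<le> exit_time a R t2 yT2 l \<psi>"
    using exit_props(2)[OF _ assms(1-3) ab] by (simp add: exit_eq)
  have cm: "(\<lambda>_. 0::real) \<in> borel_measurable borel" by simp
  show ne: "A \<noteq> {}" unfolding A_def using cm by blast
  show bd: "bdd_above A" unfolding A_def
  proof (rule bdd_aboveI[of _ "2 * R / (1 - a) + 1"], safe)
    fix \<psi> :: "real \<Rightarrow> real" assume "\<psi> \<in> borel_measurable borel"
    from ep3[OF this] show "exit_time a R t2 yT2 l \<psi> - t2 \<le> 2 * R / (1 - a) + 1"
      by simp
  qed
  show "V a R t2 yT2 l = Sup A" unfolding V_def A_def ..
  show up: "exit_time a R t2 yT2 l \<psi> - t2 \<le> V a R t2 yT2 l" if "\<psi> \<in> borel_measurable borel" for \<psi>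
    unfolding V_def by (rule cSup_upper) (use that bd A_def in auto)
  have "0 \<le> exit_time a R t2 yT2 l (\<lambda>_. 0) - t2" using ep2[OF cm] by simp
  then show "0 \<le> V a R t2 yT2 l" using up[OF cm] by linarith
qed

lemma V_mono_reach:
  fixes a R t2 yT2 l1 l2 :: real
  assumes "0 < a" "a < 1" "0 < R"
    and reach: "\<And>\<psi>1 T. \<psi>1 \<in> borel_measurable borel \<Longrightarrow> 0 \<le> T \<Longrightarrow>
       (\<forall>t\<in>{t2..t2+T}. ins a R t2 (R * sin l1) (R * cos l1) \<psi>1 t) \<Longrightarrow>
       \<exists>\<psi>2 \<in> borel_measurable borel. \<forall>t\<in>{t2..t2+T}. ins a R t2 (R * sin l2) (R * cos l2) \<psi>2 t"
  shows "V a R t2 yT2 l1 \<le> V a R t2 yT2 l2"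
proof -
  have S1: "V a R t2 yT2 l1 = Sup {exit_time a R t2 yT2 l1 \<psi> - t2 | \<psi>. \<psi> \<in> borel_measurable borel}"
    by (rule V_facts(3)[OF assms(1-3)])
  have ne1: "{exit_time a R t2 yT2 l1 \<psi> - t2 | \<psi>. \<psi> \<in> borel_measurable borel} \<noteq> {}"
    by (rule V_facts(1)[OF assms(1-3)])
  have up2: "\<And>\<psi>. \<psi> \<in> borel_measurable borel \<Longrightarrow> exit_time a R t2 yT2 l2 \<psi> - t2 \<le> V a R t2 yT2 l2"
    by (rule V_facts(4)[OF assms(1-3)])
  have nn2: "0 \<le> V a R t2 yT2 l2" by (rule V_facts(5)[OF assms(1-3)])
  have ab1: "\<bar>R * cos l1\<bar> \<le> R" "\<bar>R * cos l2\<bar> \<le> R" using abs_cos_le assms by blast+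
  show ?thesis
    unfolding S1
  proof (rule cSup_least[OF ne1])
    fix x assume "x \<in> {exit_time a R t2 yT2 l1 \<psi> - t2 |\<psi>. \<psi> \<in> borel_measurable borel}"
    then obtain \<psi>1 where m1: "\<psi>1 \<in> borel_measurable borel" and x: "x = exit_time a R t2 yT2 l1 \<psi>1 - t2"
      by auto
    show "x \<le> V a R t2 yT2 l2"
    proof (rule ccontr)
      assume "\<not> x \<le> V a R t2 yT2 l2"
      define T where "T = (x + V a R t2 yT2 l2) / 2"
      have T0: "0 \<le> T" "T < x" "V a R t2 yT2 l2 < T" using nn2 \<open>\<not> x \<le> _\<close> T_def by auto
      have "\<forall>t\<in>{t2..t2+T}. ins a R t2 (R * sin l1) (R * cos l1) \<psi>1 t"
        using exit_props(5)[OF m1 assms(1-3) ab1(1)] x T0 by (auto simp: exit_eq)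
      then obtain \<psi>2 where m2: "\<psi>2 \<in> borel_measurable borel"
        and i2: "\<forall>t\<in>{t2..t2+T}. ins a R t2 (R * sin l2) (R * cos l2) \<psi>2 t"
        using reach[OF m1 T0(1)] by blast
      have "t2 + T \<le> exit_time a R t2 yT2 l2 \<psi>2"
        using exit_props(4)[OF m2 assms(1-3) ab1(2) i2] by (simp add: exit_eq)
      then show False using up2[OF m2] T0 by linarith
    qed
  qed
qed

lemma exit_sym:
  "exit_time a R t2 yT2 (-l) (\<lambda>t. pi - \<psi> t) = exit_time a R t2 yT2 l \<psi>"
proof -
  have "integral {t2..t} (\<lambda>s. a * cos (pi - \<psi> s)) = - integral {t2..t} (\<lambda>s. a * cos (\<psi> s))" for t
    by (simp add: integral_neg[symmetric])
  then show ?thesis unfolding exit_time_def obs_x_def obs_y_def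
    by (simp add: power2_eq_square algebra_simps)
qed

lemma V_sym: "V a R t2 yT2 (-l) = V a R t2 yT2 l"
proof -
  have "{exit_time a R t2 yT2 (-l) \<psi> - t2 | \<psi>. \<psi> \<in> borel_measurable borel}
      = {exit_time a R t2 yT2 l \<psi> - t2 | \<psi>. \<psi> \<in> borel_measurable borel}"
  proof (intro equalityI subsetI)
    fix x assume "x \<in> {exit_time a R t2 yT2 (-l) \<psi> - t2 | \<psi>. \<psi> \<in> borel_measurable borel}"
    then obtain \<psi> where m: "\<psi> \<in> borel_measurable borel" "x = exit_time a R t2 yT2 (-l) \<psi> - t2" by auto
    have "(\<lambda>t. pi - \<psi> t) \<in> borel_measurable borel" using m by measurable
    moreover have "x = exit_time a R t2 yT2 l (\<lambda>t. pi - \<psi> t) - t2"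
      using m exit_sym[of a R t2 yT2 l "\<lambda>t. pi - \<psi> t"] by simp
    ultimately show "x \<in> {exit_time a R t2 yT2 l \<psi> - t2 | \<psi>. \<psi> \<in> borel_measurable borel}" by blast
  next
    fix x assume "x \<in> {exit_time a R t2 yT2 l \<psi> - t2 | \<psi>. \<psi> \<in> borel_measurable borel}"
    then obtain \<psi> where m: "\<psi> \<in> borel_measurable borel" "x = exit_time a R t2 yT2 l \<psi> - t2" by auto
    have "(\<lambda>t. pi - \<psi> t) \<in> borel_measurable borel" using m by measurable
    moreover have "x = exit_time a R t2 yT2 (-l) (\<lambda>t. pi - \<psi> t) - t2"
      using m exit_sym[of a R t2 yT2 l \<psi>] by simp
    ultimately show "x \<in> {exit_time a R t2 yT2 (-l) \<psi> - t2 | \<psi>. \<psi> \<in> borel_measurable borel}" by blast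
  qed
  then show ?thesis unfolding V_def by simp
qed



lemma int_concat:
  fixes f g :: "real \<Rightarrow> real"
  assumes fi: "\<And>x y. f integrable_on {x..y}" and gi: "\<And>x y. g integrable_on {x..y}"
    and g1: "\<And>u. u \<le> t2 + \<tau> \<Longrightarrow> g u = k" and g2: "\<And>u. t2 + \<tau> < u \<Longrightarrow> g u = f (u - \<tau> + s)"
    and "0 \<le> \<tau>" "0 \<le> s" "t2 + \<tau> \<le> t"
  shows "integral {t2..t} g = k * \<tau> + integral {t2..t-\<tau>+s} f - integral {t2..t2+s} f"
proof -
  have "integral {t2..t} g = integral {t2..t2+\<tau>} g + integral {t2+\<tau>..t} g"
    using Henstock_Kurzweil_Integration.integral_combine[where a=t2 and c="t2+\<tau>" and b=t and f=g] gi assms by simp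
  moreover have "integral {t2..t2+\<tau>} g = k * \<tau>"
  proof -
    have "integral {t2..t2+\<tau>} g = integral {t2..t2+\<tau>} (\<lambda>_. k)" by (rule integral_cong) (use g1 in auto)
    then show ?thesis using assms by simp
  qed
  moreover have "integral {t2+\<tau>..t} g = integral {t2+\<tau>..t} (f \<circ> ((+) (s - \<tau>)))"
  proof (rule integral_spike[of "{t2+\<tau>}"])
    show "negligible {t2+\<tau>}" by simp
    show "(f \<circ> (+) (s - \<tau>)) x = g x" if "x \<in> {t2 + \<tau>..t} - {t2 + \<tau>}" for x
      using that g2[of x] by (auto simp: algebra_simps)
  qed
  moreover have "integral {t2+\<tau>..t} (f \<circ> ((+) (s - \<tau>))) = integral {t2+s..t-\<tau>+s} f"
    using integral_shift_Icc_real[of "t2+\<tau>" t f "s - \<tau>"] by (simp add: algebra_simps)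
  moreover have "integral {t2..t2+s} f + integral {t2+s..t-\<tau>+s} f = integral {t2..t-\<tau>+s} f"
    using Henstock_Kurzweil_Integration.integral_combine[where a=t2 and c="t2+s" and b="t-\<tau>+s" and f=f] fi assms by simp
  ultimately show ?thesis by linarith
qed

lemma comp:
  fixes a R t2 T s \<tau> c p1x p1y p2x p2y :: real
  assumes m1: "\<psi>1 \<in> borel_measurable borel" and a: "0 \<le> a" and s: "0 \<le> s" "s \<le> \<tau>"
    and meetx: "p2x + a * cos c * \<tau> = p1x + IX a \<psi>1 t2 (t2+s)"
    and meety: "p2y + (a * sin c - 1) * \<tau> = p1y + IY a \<psi>1 t2 (t2+s)"
    and seg: "\<And>t. t2 \<le> t \<Longrightarrow> t \<le> t2 + \<tau> \<Longrightarrow>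
       (p2x + a * cos c * (t - t2))\<^sup>2 + (p2y + (a * sin c - 1) * (t - t2))\<^sup>2 \<le> R\<^sup>2"
    and traj: "\<And>t. t2 + s \<le> t \<Longrightarrow> t \<le> t2 + T \<Longrightarrow> ins a R t2 p1x p1y \<psi>1 t"
  shows "\<exists>\<psi>2\<in>borel_measurable borel. \<forall>t\<in>{t2..t2+T}. ins a R t2 p2x p2y \<psi>2 t"
proof -
  define \<psi>2 where "\<psi>2 = (\<lambda>u. if u \<le> t2 + \<tau> then c else \<psi>1 (u - \<tau> + s))"
  have m2: "\<psi>2 \<in> borel_measurable borel" unfolding \<psi>2_def using m1 by measurable
  have "ins a R t2 p2x p2y \<psi>2 t" if t: "t2 \<le> t" "t \<le> t2 + T" for t
  proof (cases "t \<le> t2 + \<tau>")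
    case True
    have "IX a \<psi>2 t2 t = integral {t2..t} (\<lambda>_. a * cos c)"
      unfolding IX_def by (rule integral_cong) (use True in \<open>auto simp: \<psi>2_def\<close>)
    then have x: "IX a \<psi>2 t2 t = a * cos c * (t - t2)" using t by simp
    have "integral {t2..t} (\<lambda>u. a * sin (\<psi>2 u)) = integral {t2..t} (\<lambda>_. a * sin c)"
      by (rule integral_cong) (use True in \<open>auto simp: \<psi>2_def\<close>)
    then have y: "IY a \<psi>2 t2 t = (a * sin c - 1) * (t - t2)" using t unfolding IY_def
      by (simp add: algebra_simps)
    show ?thesis unfolding ins_def x y using seg[OF t(1) True] .
  next
    case False
    have cx: "integral {t2..t} (\<lambda>u. a * cos (\<psi>2 u)) = a * cos c * \<tau>
        + integral {t2..t-\<tau>+s} (\<lambda>u. a * cos (\<psi>1 u)) - integral {t2..t2+s} (\<lambda>u. a * cos (\<psi>1 u))"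
      by (rule int_concat) (use False s intg[OF m1 a] intg[OF m2 a] in \<open>auto simp: \<psi>2_def\<close>)
    have cy: "integral {t2..t} (\<lambda>u. a * sin (\<psi>2 u)) = a * sin c * \<tau>
        + integral {t2..t-\<tau>+s} (\<lambda>u. a * sin (\<psi>1 u)) - integral {t2..t2+s} (\<lambda>u. a * sin (\<psi>1 u))"
      by (rule int_concat) (use False s intg[OF m1 a] intg[OF m2 a] in \<open>auto simp: \<psi>2_def\<close>)
    have ex: "p2x + IX a \<psi>2 t2 t = p1x + IX a \<psi>1 t2 (t - \<tau> + s)"
      using cx meetx unfolding IX_def by (simp add: algebra_simps)
    have ey: "p2y + IY a \<psi>2 t2 t = p1y + IY a \<psi>1 t2 (t - \<tau> + s)"
      using cy meety unfolding IY_def by (simp add: algebra_simps)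
    have "ins a R t2 p1x p1y \<psi>1 (t - \<tau> + s)" by (rule traj) (use False t s in auto)
    then show ?thesis unfolding ins_def ex ey .
  qed
  then show ?thesis using m2 by (intro bexI[of _ \<psi>2]) auto
qed



lemma geomB:
  fixes a1 a2 b1 b2 a :: real
  assumes c1: "a1\<^sup>2 + a2\<^sup>2 = 1" and c2: "b1\<^sup>2 + b2\<^sup>2 = 1"
    and o: "0 \<le> a1" "a1 \<le> b1" "0 \<le> b2" "b2 \<le> a2" "a2 < a"
  shows "(1 - a\<^sup>2) * (b1 - a1)\<^sup>2 \<le> a\<^sup>2 * (a2 - b2)\<^sup>2"
proof -
  have h0: "0 \<le> (a1 - b1)\<^sup>2 + (a2 - b2)\<^sup>2" by simp
  have h1: "a1 * b1 + a2 * b2 \<le> 1" using h0 c1 c2 by (simp add: power2_eq_square algebra_simps)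
  have h2: "(b1 - a1) * a1 \<le> (a2 - b2) * a2" using h1 c1 by (simp add: power2_eq_square algebra_simps)
  have h3: "0 \<le> (b1 - a1) * a1" using o by simp
  have h4: "((b1 - a1) * a1)\<^sup>2 \<le> ((a2 - b2) * a2)\<^sup>2" using h2 h3 by (rule power_mono)
  have a2sq: "a2\<^sup>2 \<le> a\<^sup>2" using o by (intro power_mono) auto
  have h5: "(1 - a\<^sup>2) * a2\<^sup>2 \<le> a\<^sup>2 * a1\<^sup>2"
  proof -
    have "a\<^sup>2 * a1\<^sup>2 + a\<^sup>2 * a2\<^sup>2 = a\<^sup>2" using c1 by (metis distrib_left mult_1_right)
    then show ?thesis using a2sq by (simp add: algebra_simps)
  qed
  have h6: "a2\<^sup>2 * ((1 - a\<^sup>2) * (b1 - a1)\<^sup>2) \<le> a2\<^sup>2 * (a\<^sup>2 * (a2 - b2)\<^sup>2)"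
  proof -
    have "a2\<^sup>2 * ((1 - a\<^sup>2) * (b1 - a1)\<^sup>2) = (b1 - a1)\<^sup>2 * ((1 - a\<^sup>2) * a2\<^sup>2)" by (simp add: algebra_simps)
    also have "\<dots> \<le> (b1 - a1)\<^sup>2 * (a\<^sup>2 * a1\<^sup>2)" using h5 by (intro mult_left_mono) auto
    also have "\<dots> = a\<^sup>2 * ((b1 - a1) * a1)\<^sup>2" by (simp add: power2_eq_square algebra_simps)
    also have "\<dots> \<le> a\<^sup>2 * ((a2 - b2) * a2)\<^sup>2" using h4 by (intro mult_left_mono) auto
    also have "\<dots> = a2\<^sup>2 * (a\<^sup>2 * (a2 - b2)\<^sup>2)" by (simp add: power2_eq_square algebra_simps)
    finally show ?thesis .
  qed
  show ?thesis
  proof (cases "a2 = 0")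
    case True
    then have "a1\<^sup>2 = 1" using c1 by simp
    then have "a1 = 1" using o by (simp add: power2_eq_1_iff)
    moreover have "b1 \<le> 1"
    proof -
      have "b1\<^sup>2 \<le> 1" using c2 zero_le_power2[of b2] by linarith
      then have "\<bar>b1\<bar> \<le> 1" by (simp add: abs_square_le_1)
      then show ?thesis by simp
    qed
    ultimately have "b1 = a1" using o by simp
    then show ?thesis by simp
  next
    case False
    then have "0 < a2\<^sup>2" by simp
    then show ?thesis using h6 by simp
  qed
qed

lemma chord_dir:
  fixes a dx dy :: real
  assumes a: "0 < a" "a < 1" and dy: "dy < 0" and cond: "(1 - a\<^sup>2) * dx\<^sup>2 \<le> a\<^sup>2 * dy\<^sup>2"
  shows "\<exists>\<tau> c. 0 < \<tau> \<and> a * cos c * \<tau> = dx \<and> (a * sin c - 1) * \<tau> = dy"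
proof -
  define k where "k = 1 - a\<^sup>2"
  have k: "0 < k" "k < 1" unfolding k_def using a by (auto simp: power_less_one_iff)
  define \<Delta> where "\<Delta> = a\<^sup>2 * dy\<^sup>2 - k * dx\<^sup>2"
  have D0: "0 \<le> \<Delta>" using cond unfolding \<Delta>_def k_def by simp
  define r where "r = sqrt \<Delta>"
  have r: "0 \<le> r" "r\<^sup>2 = \<Delta>" unfolding r_def using D0 by auto
  have Dlt: "\<Delta> < dy\<^sup>2"
  proof -
    have "0 < k * (dx\<^sup>2 + dy\<^sup>2)" using k dy by (intro mult_pos_pos) (auto simp: add_nonneg_pos)
    then show ?thesis unfolding \<Delta>_def k_def by (simp add: algebra_simps)
  qed
  have rlt: "r < - dy"
  proof -
    have "r\<^sup>2 < (-dy)\<^sup>2" using r Dlt by simp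
    then show ?thesis using r dy power_less_imp_less_base[of r 2 "-dy"] by simp
  qed
  define \<tau> where "\<tau> = (- dy - r) / k"
  have tp: "0 < \<tau>" unfolding \<tau>_def using rlt k by simp
  have q: "k * \<tau>\<^sup>2 + 2 * dy * \<tau> + dx\<^sup>2 + dy\<^sup>2 = 0"
  proof -
    have "k * \<tau> = - dy - r" unfolding \<tau>_def using k by simp
    have "k * (k * \<tau>\<^sup>2 + 2 * dy * \<tau> + dx\<^sup>2 + dy\<^sup>2) = (k * \<tau>)\<^sup>2 + 2 * dy * (k * \<tau>) + k * dx\<^sup>2 + k * dy\<^sup>2"
      by (simp add: power2_eq_square algebra_simps)
    also have "\<dots> = (dy + r)\<^sup>2 - 2 * dy * (dy + r) + k * dx\<^sup>2 + k * dy\<^sup>2"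
      unfolding \<open>k * \<tau> = - dy - r\<close> by (simp add: power2_eq_square algebra_simps)
    also have "\<dots> = r\<^sup>2 - dy\<^sup>2 + k * dx\<^sup>2 + k * dy\<^sup>2" by (simp add: power2_eq_square algebra_simps)
    also have "\<dots> = 0" using r unfolding \<Delta>_def k_def by (simp add: power2_eq_square algebra_simps)
    finally show ?thesis using k by simp
  qed
  define u1 where "u1 = dx / (a * \<tau>)"
  define u2 where "u2 = (dy / \<tau> + 1) / a"
  have "u1\<^sup>2 + u2\<^sup>2 = 1"
  proof -
    have "(a * \<tau>)\<^sup>2 * (u1\<^sup>2 + u2\<^sup>2) = dx\<^sup>2 + (dy + \<tau>)\<^sup>2"
      unfolding u1_def u2_def using tp a by (simp add: field_simps power2_eq_square)
    also have "\<dots> = (a * \<tau>)\<^sup>2" using q unfolding k_def by (simp add: power2_eq_square algebra_simps)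
    finally show ?thesis using tp a by simp
  qed
  then obtain c where c: "u1 = cos c" "u2 = sin c" using sincos_total_2pi by metis
  have "a * cos c * \<tau> = dx" using c(1) tp a unfolding u1_def by (simp add: field_simps)
  moreover have "(a * sin c - 1) * \<tau> = dy" using c(2) tp a unfolding u2_def by (simp add: field_simps)
  ultimately show ?thesis using tp by blast
qed

lemma conv_disk:
  fixes x1 y1 x2 y2 R th :: real
  assumes "x1\<^sup>2 + y1\<^sup>2 = R\<^sup>2" "x2\<^sup>2 + y2\<^sup>2 = R\<^sup>2" "0 \<le> th" "th \<le> 1"
  shows "((1 - th) * x2 + th * x1)\<^sup>2 + ((1 - th) * y2 + th * y1)\<^sup>2 \<le> R\<^sup>2"
proof -
  have d: "2 * (x1 * x2 + y1 * y2) \<le> 2 * R\<^sup>2"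
  proof -
    have "0 \<le> (x1 - x2)\<^sup>2 + (y1 - y2)\<^sup>2" by simp
    then show ?thesis using assms by (simp add: power2_eq_square algebra_simps)
  qed
  have e: "((1 - th) * x2 + th * x1)\<^sup>2 + ((1 - th) * y2 + th * y1)\<^sup>2
      = (1 - th)\<^sup>2 * (x2\<^sup>2 + y2\<^sup>2) + th\<^sup>2 * (x1\<^sup>2 + y1\<^sup>2) + (th * (1 - th)) * (2 * (x1 * x2 + y1 * y2))"
    by (simp add: power2_eq_square algebra_simps)
  then have e: "((1 - th) * x2 + th * x1)\<^sup>2 + ((1 - th) * y2 + th * y1)\<^sup>2
      = ((1 - th)\<^sup>2 + th\<^sup>2) * R\<^sup>2 + (th * (1 - th)) * (2 * (x1 * x2 + y1 * y2))"
    using assms(1,2) by (simp add: algebra_simps)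
  have "(th * (1 - th)) * (2 * (x1 * x2 + y1 * y2)) \<le> (th * (1 - th)) * (2 * R\<^sup>2)"
    using d assms by (intro mult_left_mono) auto
  then have "((1 - th) * x2 + th * x1)\<^sup>2 + ((1 - th) * y2 + th * y1)\<^sup>2 \<le> ((1 - th)\<^sup>2 + th\<^sup>2) * R\<^sup>2 + (th * (1 - th)) * (2 * R\<^sup>2)"
    using e by linarith
  also have "\<dots> = R\<^sup>2" by (simp add: power2_eq_square algebra_simps)
  finally show ?thesis .
qed


lemma sq_le: fixes v b :: real shows "- b \<le> v \<Longrightarrow> v \<le> b \<Longrightarrow> v\<^sup>2 \<le> b\<^sup>2"
  using abs_le_square_iff[of v b] by auto

lemma sq_ge: fixes v b :: real shows "v\<^sup>2 \<le> b\<^sup>2 \<Longrightarrow> 0 \<le> b \<Longrightarrow> - b \<le> v"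
  using abs_le_square_iff[of v b] by auto

lemma circ: "(R * sin l)\<^sup>2 + (R * cos l)\<^sup>2 = (R::real)\<^sup>2"
proof -
  have "(R * sin l)\<^sup>2 + (R * cos l)\<^sup>2 = R\<^sup>2 * ((sin l)\<^sup>2 + (cos l)\<^sup>2)"
    by (simp only: power_mult_distrib distrib_left)
  also have "\<dots> = R\<^sup>2" by simp
  finally show ?thesis .
qed

lemma IX_cont:
  assumes "\<psi> \<in> borel_measurable borel" "0 \<le> a"
  shows "continuous_on {t2..b} (\<lambda>t. x + IX a \<psi> t2 t)"
  unfolding IX_def
  by (intro continuous_intros indefinite_integral_continuous_1 intg assms)

lemma caseA:
  fixes a R t2 T l1 l2 :: real
  assumes a: "0 < a" "a < 1" and R: "0 < R" and l: "-(pi/2) \<le> l1" "l1 \<le> l2" "l2 \<le> 0"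
    and m1: "\<psi>1 \<in> borel_measurable borel" and T: "0 \<le> T"
    and ins1: "\<forall>t\<in>{t2..t2+T}. ins a R t2 (R * sin l1) (R * cos l1) \<psi>1 t"
  shows "\<exists>\<psi>2\<in>borel_measurable borel. \<forall>t\<in>{t2..t2+T}. ins a R t2 (R * sin l2) (R * cos l2) \<psi>2 t"
proof -
  define x1 where "x1 = R * sin l1"
  define y1 where "y1 = R * cos l1"
  define x2 where "x2 = R * sin l2"
  define y2 where "y2 = R * cos l2"
  have "sin l1 \<le> sin l2" using l by (intro sin_monotone_2pi_le) auto
  then have x12: "x1 \<le> x2" unfolding x1_def x2_def using R by (simp add: mult_left_mono)
  have "0 \<le> sin (-l2)" using l by (intro sin_ge_zero) auto
  then have x20: "x2 \<le> 0" unfolding x2_def using R by (simp add: mult_nonneg_nonpos)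
  have "cos (-l1) \<le> cos (-l2)" using l by (intro cos_monotone_0_pi_le) auto
  then have y12: "y1 \<le> y2" unfolding y1_def y2_def using R by (simp add: mult_left_mono)
  have "0 \<le> cos l2" using l by (intro cos_ge_zero) auto
  then have y20: "0 \<le> y2" unfolding y2_def using R by simp
  have c2: "x2\<^sup>2 + y2\<^sup>2 = R\<^sup>2" unfolding x2_def y2_def by (rule circ)
  define X where "X = (\<lambda>t. x1 + IX a \<psi>1 t2 t)"
  define Y where "Y = (\<lambda>t. y1 + IY a \<psi>1 t2 t)"
  have insXY: "(X t)\<^sup>2 + (Y t)\<^sup>2 \<le> R\<^sup>2" if "t \<in> {t2..t2+T}" for t
    using ins1 that unfolding ins_def X_def Y_def x1_def y1_def by auto
  have Yle: "Y t \<le> y1 - (1 - a) * (t - t2)" if "t2 \<le> t" for t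
    using IY_le[OF m1 _ that, of a] a unfolding Y_def by (simp add: algebra_simps)
  have contX: "continuous_on {t2..t2+T} X" unfolding X_def using IX_cont[OF m1] a by simp
  show ?thesis
  proof (cases "\<exists>s\<in>{0..T}. X (t2 + s) = x2")
    case True
    then obtain s where s: "0 \<le> s" "s \<le> T" "X (t2 + s) = x2" by auto
    define Ys where "Ys = Y (t2 + s)"
    have "x2\<^sup>2 + Ys\<^sup>2 \<le> R\<^sup>2" using insXY[of "t2+s"] s unfolding Ys_def by auto
    then have "Ys\<^sup>2 \<le> y2\<^sup>2" using c2 by simp
    then have Ysge: "- y2 \<le> Ys" using sq_ge y20 by blast
    have Ysle: "Ys \<le> y1 - (1 - a) * s" using Yle[of "t2+s"] s unfolding Ys_def by simp
    define \<tau> where "\<tau> = (y2 - Ys) / (1 - a)"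
    have tau1: "(1 - a) * \<tau> = y2 - Ys" unfolding \<tau>_def using a by simp
    have st: "s \<le> \<tau>"
    proof -
      have "(1 - a) * s \<le> (1 - a) * \<tau>" using tau1 Ysle y12 by linarith
      then show ?thesis using a by simp
    qed
    show ?thesis
    proof (rule comp[OF m1 _ s(1) st, where c="pi/2"])
      show "0 \<le> a" using a by simp
      show "R * sin l2 + a * cos (pi / 2) * \<tau> = R * sin l1 + IX a \<psi>1 t2 (t2 + s)"
        using s(3) unfolding X_def x1_def x2_def by simp
      show "R * cos l2 + (a * sin (pi / 2) - 1) * \<tau> = R * cos l1 + IY a \<psi>1 t2 (t2 + s)"
        using tau1 unfolding Ys_def Y_def y1_def y2_def by (simp add: algebra_simps)
      show "(R * sin l2 + a * cos (pi / 2) * (t - t2))\<^sup>2 + (R * cos l2 + (a * sin (pi / 2) - 1) * (t - t2))\<^sup>2 \<le> R\<^sup>2"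
        if "t2 \<le> t" "t \<le> t2 + \<tau>" for t
      proof -
        define v where "v = y2 + (a - 1) * (t - t2)"
        have "(1 - a) * (t - t2) \<le> (1 - a) * \<tau>" using that a by (intro mult_left_mono) auto
        moreover have "0 \<le> (1 - a) * (t - t2)" using that a by simp
        ultimately have "v\<^sup>2 \<le> y2\<^sup>2" unfolding v_def using tau1 Ysge by (intro sq_le) (auto simp: algebra_simps)
        then show ?thesis using c2 unfolding v_def x2_def y2_def by simp
      qed
      show "ins a R t2 (R * sin l1) (R * cos l1) \<psi>1 t" if "t2 + s \<le> t" "t \<le> t2 + T" for t
        using ins1 that s by auto
    qed
  next
    case False
    have Xlt: "X t < x2" if t: "t \<in> {t2..t2+T}" for t
    proof (rule ccontr)
      assume "\<not> X t < x2"
      moreover have "X t2 \<le> x2" unfolding X_def using x12 by simp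
      moreover have "continuous_on {t2..t} X" using t by (intro continuous_on_subset[OF contX]) auto
      ultimately obtain s' where "t2 \<le> s'" "s' \<le> t" "X s' = x2"
        using IVT'[of X t2 x2 t] t by auto
      moreover have "s' - t2 \<in> {0..T}" using calculation t by auto
      moreover have "X (t2 + (s' - t2)) = x2" using calculation by simp
      ultimately show False using False by blast
    qed
    have TT: "t2 + T \<in> {t2..t2+T}" using T by simp
    have "x2\<^sup>2 \<le> (- X (t2+T))\<^sup>2" using Xlt[OF TT] x20 by (intro sq_le) auto
    then have "x2\<^sup>2 \<le> (X (t2+T))\<^sup>2" by simp
    then have "(Y (t2+T))\<^sup>2 \<le> y2\<^sup>2" using insXY[OF TT] c2 by linarith
    then have "- y2 \<le> Y (t2+T)" using sq_ge y20 by blast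
    then have bT: "(1 - a) * T \<le> 2 * y2" using Yle[of "t2+T"] T y12 by simp
    have "ins a R t2 (R * sin l2) (R * cos l2) (\<lambda>_. pi/2) t" if t: "t \<in> {t2..t2+T}" for t
    proof -
      have ix: "IX a (\<lambda>_. pi/2) t2 t = 0" unfolding IX_def by simp
      have iy: "IY a (\<lambda>_. pi/2) t2 t = (a - 1) * (t - t2)" unfolding IY_def using t by (simp add: algebra_simps)
      have "(1 - a) * (t - t2) \<le> (1 - a) * T" using t a by (intro mult_left_mono) auto
      moreover have "0 \<le> (1 - a) * (t - t2)" using t a by simp
      ultimately have "(y2 + (a - 1) * (t - t2))\<^sup>2 \<le> y2\<^sup>2" using bT by (intro sq_le) (auto simp: algebra_simps)
      then show ?thesis unfolding ins_def ix iy using c2 unfolding x2_def y2_def by simp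
    qed
    then show ?thesis by (intro bexI[of _ "\<lambda>_. pi/2"]) auto
  qed
qed



lemma lin_aux: fixes A B P C D :: real
  shows "A = B + 2 * P + C + D \<Longrightarrow> 0 \<le> P \<Longrightarrow> 0 < D \<Longrightarrow> 0 \<le> C \<Longrightarrow> B < A"
  by linarith

lemma no_enter:
  fixes a R t2 t l :: real
  assumes m: "\<psi> \<in> borel_measurable borel" and a: "0 < a" "a < 1" and R: "0 < R"
    and y: "R * cos l \<le> - a * R" and t: "t2 < t"
  shows "\<not> ins a R t2 (R * sin l) (R * cos l) \<psi> t"
proof
  assume I: "ins a R t2 (R * sin l) (R * cos l) \<psi> t"
  define x where "x = R * sin l"
  define y where "y = R * cos l"
  define h where "h = t - t2"
  have h: "0 < h" using t h_def by simp
  define DX where "DX = IX a \<psi> t2 t"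
  define DY where "DY = IY a \<psi> t2 t"
  define F where "F = (\<lambda>u. x * (a * cos (\<psi> u)) + y * (a * sin (\<psi> u)))"
  have i1: "(\<lambda>u. x * (a * cos (\<psi> u))) integrable_on {t2..t}"
    using integrable_on_cmult_left[OF intg(1)[OF m, of a], of x] a by simp
  have i2: "(\<lambda>u. y * (a * sin (\<psi> u))) integrable_on {t2..t}"
    using integrable_on_cmult_left[OF intg(2)[OF m, of a], of y] a by simp
  have Fi: "integral {t2..t} F = x * DX + y * integral {t2..t} (\<lambda>u. a * sin (\<psi> u))"
  proof -
    have "integral {t2..t} F = integral {t2..t} (\<lambda>u. x * (a * cos (\<psi> u))) + integral {t2..t} (\<lambda>u. y * (a * sin (\<psi> u)))"
      unfolding F_def by (rule integral_add[OF i1 i2])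
    then show ?thesis unfolding DX_def IX_def by simp
  qed
  have Fb: "- (a * R) \<le> F u" for u
  proof -
    have "F u = a * (R * sin (l + \<psi> u))" unfolding F_def x_def y_def sin_add by (simp add: algebra_simps)
    moreover have "- R \<le> R * sin (l + \<psi> u)" using R mult_left_mono[OF sin_ge_minus_one[of "l + \<psi> u"], of R] by simp
    ultimately show ?thesis using a mult_left_mono[of "- R" "R * sin (l + \<psi> u)" a] by simp
  qed
  have FI: "F integrable_on {t2..t}" unfolding F_def using i1 i2 by (rule integrable_add)
  have "- (a * R) * h \<le> integral {t2..t} F" unfolding h_def by (rule int_ge[OF FI]) (use t Fb in auto)
  then have key: "0 \<le> x * DX + y * DY"
  proof -
    assume A: "- (a * R) * h \<le> integral {t2..t} F"
    have "x * DX + y * DY = integral {t2..t} F - y * h"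
      unfolding Fi DY_def IY_def h_def by (simp add: algebra_simps)
    moreover have "0 \<le> (- (a * R) - y) * h" using y h unfolding y_def by simp
    ultimately show ?thesis using A by (simp add: algebra_simps)
  qed
  have "DY \<le> - (1 - a) * h" unfolding DY_def h_def using IY_le[OF m _ , of a t2 t] a t by simp
  moreover have "0 < (1 - a) * h" using a h by simp
  ultimately have "DY < 0" by linarith
  then have "0 < DY\<^sup>2" by simp
  have "(x + DX)\<^sup>2 + (y + DY)\<^sup>2 = (x\<^sup>2 + y\<^sup>2) + 2 * (x * DX + y * DY) + DX\<^sup>2 + DY\<^sup>2"
    by (simp add: power2_eq_square algebra_simps)
  also have "x\<^sup>2 + y\<^sup>2 = R\<^sup>2" unfolding x_def y_def by (rule circ)
  finally have "R\<^sup>2 < (x + DX)\<^sup>2 + (y + DY)\<^sup>2" using key \<open>0 < DY\<^sup>2\<close> zero_le_power2[of DX] by (rule lin_aux)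
  then show False using I unfolding ins_def x_def y_def DX_def DY_def by simp
qed

lemma caseB:
  fixes a R t2 T l1 l2 :: real
  assumes a: "0 < a" "a < 1" and R: "0 < R" and l: "-pi \<le> l1" "l1 \<le> l2" "l2 \<le> -(pi/2)"
    and m1: "\<psi>1 \<in> borel_measurable borel" and T: "0 \<le> T"
    and ins1: "\<forall>t\<in>{t2..t2+T}. ins a R t2 (R * sin l1) (R * cos l1) \<psi>1 t"
  shows "\<exists>\<psi>2\<in>borel_measurable borel. \<forall>t\<in>{t2..t2+T}. ins a R t2 (R * sin l2) (R * cos l2) \<psi>2 t"
proof -
  define x1 where "x1 = R * sin l1"
  define y1 where "y1 = R * cos l1"
  define x2 where "x2 = R * sin l2"
  define y2 where "y2 = R * cos l2"
  have c1: "x1\<^sup>2 + y1\<^sup>2 = R\<^sup>2" unfolding x1_def y1_def by (rule circ)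
  have c2: "x2\<^sup>2 + y2\<^sup>2 = R\<^sup>2" unfolding x2_def y2_def by (rule circ)
  have s12: "sin (l1 + pi) \<le> sin (l2 + pi)" using l by (intro sin_monotone_2pi_le) auto
  have s1: "0 \<le> sin (l1 + pi)" using l by (intro sin_ge_zero) auto
  have cc12: "cos (l2 + pi) \<le> cos (l1 + pi)" using l by (intro cos_monotone_0_pi_le) auto
  have cc2: "0 \<le> cos (l2 + pi)" using l by (intro cos_ge_zero) auto
  have sp: "sin (l + pi) = - sin l" "cos (l + pi) = - cos l" for l by (simp_all add: sin_add cos_add)
  show ?thesis
  proof (cases "R * cos l1 \<le> - a * R")
    case True
    show ?thesis
    proof (cases "T = 0")
      case True
      have "ins a R t2 (R * sin l2) (R * cos l2) (\<lambda>_. 0) t2" unfolding ins_def using circ[of R l2] by simp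
      then show ?thesis using True by (intro bexI[of _ "\<lambda>_. 0"]) auto
    next
      case False
      then have "t2 + T \<in> {t2..t2+T}" "t2 < t2 + T" using T by auto
      then show ?thesis using ins1 no_enter[OF m1 a R \<open>R * cos l1 \<le> - a * R\<close>, of t2 "t2+T"] by auto
    qed
  next
    case False
    show ?thesis
    proof (cases "cos l1 = cos l2")
      case True
      then have "cos (l1 + pi) = cos (l2 + pi)" using sp by simp
      then have "l1 + pi = l2 + pi" using cos_inj_pi[of "l1+pi" "l2+pi"] l pi_gt_zero by linarith
      then have "l1 = l2" by simp
      then show ?thesis using ins1 m1 by (intro bexI[of _ \<psi>1]) simp_all
    next
      case cne: False
      define dx where "dx = x1 - x2"
      define dy where "dy = y1 - y2"
      have "cos l1 \<le> cos l2" using cc12 sp by simp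
      then have "cos l1 < cos l2" using cne by simp
      then have dy: "dy < 0" unfolding dy_def y1_def y2_def using R by simp
      have gB: "(1 - a\<^sup>2) * (- sin l2 - - sin l1)\<^sup>2 \<le> a\<^sup>2 * (- cos l1 - - cos l2)\<^sup>2"
      proof (rule geomB)
        show "(- sin l1)\<^sup>2 + (- cos l1)\<^sup>2 = 1" by simp
        show "(- sin l2)\<^sup>2 + (- cos l2)\<^sup>2 = 1" by simp
        show "0 \<le> - sin l1" using s1 sp by simp
        show "- sin l1 \<le> - sin l2" using s12 sp by simp
        show "0 \<le> - cos l2" using cc2 sp by simp
        show "- cos l2 \<le> - cos l1" using \<open>cos l1 \<le> cos l2\<close> by simp
        have "R * (- cos l1) < R * a" using False by (simp add: algebra_simps)
        then show "- cos l1 < a" using R by (metis mult_less_cancel_left_pos)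
      qed
      have cond: "(1 - a\<^sup>2) * dx\<^sup>2 \<le> a\<^sup>2 * dy\<^sup>2"
      proof -
        have ex: "dx\<^sup>2 = R\<^sup>2 * (- sin l2 - - sin l1)\<^sup>2" unfolding dx_def x1_def x2_def
          by (simp add: power2_eq_square algebra_simps)
        have ey: "dy\<^sup>2 = R\<^sup>2 * (- cos l1 - - cos l2)\<^sup>2" unfolding dy_def y1_def y2_def
          by (simp add: power2_eq_square algebra_simps)
        have "R\<^sup>2 * ((1 - a\<^sup>2) * (- sin l2 - - sin l1)\<^sup>2) \<le> R\<^sup>2 * (a\<^sup>2 * (- cos l1 - - cos l2)\<^sup>2)"
          using gB by (intro mult_left_mono) auto
        then show ?thesis unfolding ex ey by (simp add: algebra_simps)
      qed
      obtain \<tau> c where tc: "0 < \<tau>" "a * cos c * \<tau> = dx" "(a * sin c - 1) * \<tau> = dy"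
        using chord_dir[OF a dy cond] by blast
      show ?thesis
      proof (rule comp[OF m1 _ order_refl _, where \<tau>=\<tau> and c=c])
        show "0 \<le> a" using a by simp
        show "0 \<le> \<tau>" using tc by simp
        show "R * sin l2 + a * cos c * \<tau> = R * sin l1 + IX a \<psi>1 t2 (t2 + 0)"
          using tc unfolding dx_def x1_def x2_def by simp
        show "R * cos l2 + (a * sin c - 1) * \<tau> = R * cos l1 + IY a \<psi>1 t2 (t2 + 0)"
          using tc unfolding dy_def y1_def y2_def by simp
        show "ins a R t2 (R * sin l1) (R * cos l1) \<psi>1 t" if "t2 + 0 \<le> t" "t \<le> t2 + T" for t
          using ins1 that by auto
        show "(R * sin l2 + a * cos c * (t - t2))\<^sup>2 + (R * cos l2 + (a * sin c - 1) * (t - t2))\<^sup>2 \<le> R\<^sup>2"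
          if "t2 \<le> t" "t \<le> t2 + \<tau>" for t
        proof -
          define th where "th = (t - t2) / \<tau>"
          have th: "0 \<le> th" "th \<le> 1" unfolding th_def using that tc by auto
          have tt: "t - t2 = th * \<tau>" unfolding th_def using tc by simp
          have e1: "a * cos c * (t - t2) = th * dx"
          proof -
            have "a * cos c * (t - t2) = th * (a * cos c * \<tau>)" unfolding tt by (simp add: algebra_simps)
            then show ?thesis using tc(2) by simp
          qed
          have e2: "(a * sin c - 1) * (t - t2) = th * dy"
          proof -
            have "(a * sin c - 1) * (t - t2) = th * ((a * sin c - 1) * \<tau>)" unfolding tt by (simp add: algebra_simps)
            then show ?thesis using tc(3) by simp
          qed
          have "R * sin l2 + a * cos c * (t - t2) = (1 - th) * x2 + th * x1"
            unfolding e1 dx_def x2_def by (simp add: algebra_simps)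
          moreover have "R * cos l2 + (a * sin c - 1) * (t - t2) = (1 - th) * y2 + th * y1"
            unfolding e2 dy_def y2_def by (simp add: algebra_simps)
          ultimately show ?thesis using conv_disk[OF c1 c2 th] by simp
        qed
      qed
    qed
  qed
qed


lemma monoL:
  fixes a R t2 yT2 l1 l2 :: real
  assumes a: "0 < a" "a < 1" and R: "0 < R" and l: "-pi \<le> l1" "l1 \<le> l2" "l2 \<le> 0"
  shows "V a R t2 yT2 l1 \<le> V a R t2 yT2 l2"
proof -
  have A: "V a R t2 yT2 u \<le> V a R t2 yT2 v" if "-(pi/2) \<le> u" "u \<le> v" "v \<le> 0" for u v
    by (rule V_mono_reach[OF a R]) (rule caseA[OF a R that], assumption+)
  have B: "V a R t2 yT2 u \<le> V a R t2 yT2 v" if "-pi \<le> u" "u \<le> v" "v \<le> -(pi/2)" for u v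
    by (rule V_mono_reach[OF a R]) (rule caseB[OF a R that], assumption+)
  show ?thesis
  proof (cases "l2 \<le> -(pi/2)")
    case True
    then show ?thesis using B l by blast
  next
    case False
    show ?thesis
    proof (cases "-(pi/2) \<le> l1")
      case True
      then show ?thesis using A l by blast
    next
      case False2: False
      have "V a R t2 yT2 l1 \<le> V a R t2 yT2 (-(pi/2))" using B l False2 by simp
      also have "\<dots> \<le> V a R t2 yT2 l2" using A l False by simp
      finally show ?thesis .
    qed
  qed
qed

theorem lemma3:
  fixes \<alpha> R t2 yT2 :: real
  assumes "0 < \<alpha>" and "\<alpha> < 1" and "0 < R"
  shows "monotone_on {-pi..0} (\<le>) (\<le>) (V \<alpha> R t2 yT2)
       \<and> monotone_on {0..pi} (\<le>) (\<ge>) (V \<alpha> R t2 yT2)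
       \<and> (\<forall>lam\<in>{-pi..pi}. V \<alpha> R t2 yT2 lam \<le> V \<alpha> R t2 yT2 0)"
proof (intro conjI)
  show m1: "monotone_on {-pi..0} (\<le>) (\<le>) (V \<alpha> R t2 yT2)"
    unfolding monotone_on_def using monoL[OF assms] by auto
  have m2: "V \<alpha> R t2 yT2 y \<le> V \<alpha> R t2 yT2 x" if "0 \<le> x" "x \<le> y" "y \<le> pi" for x y
  proof -
    have "V \<alpha> R t2 yT2 (-y) \<le> V \<alpha> R t2 yT2 (-x)" using monoL[OF assms, of "-y" "-x"] that by simp
    then show ?thesis using V_sym by metis
  qed
  show "monotone_on {0..pi} (\<le>) (\<ge>) (V \<alpha> R t2 yT2)"
    unfolding monotone_on_def using m2 by auto
  show "\<forall>lam\<in>{-pi..pi}. V \<alpha> R t2 yT2 lam \<le> V \<alpha> R t2 yT2 0"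
  proof
    fix lam assume l: "lam \<in> {-pi..pi}"
    show "V \<alpha> R t2 yT2 lam \<le> V \<alpha> R t2 yT2 0"
    proof (cases "lam \<le> 0")
      case True
      then show ?thesis using monoL[OF assms, of lam 0] l by auto
    next
      case False
      then show ?thesis using m2[of 0 lam] l by auto
    qed
  qed
qed

end
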